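(* Let $\Sigma$ be a complete rational polyhedral fan in $\mathbb{R}^n$ with rays $\rho_1,\ldots,\rho_k$ and primitive ray generators $u_1,\ldots,u_k\in\mathbb{Z}^n$, and let $F=[u_1~\cdots~u_k]\in\mathbb{Z}^{n\times k}$. Let $Z\subset\mathbb{C}^k$ be the base locus and $G\subset(\mathbb{C}^* )^k$ the group of the Cox construction (see context). Let $P\in\mathbb{Z}^{k\times k}$, $Q\in\mathbb{Z}^{n\times n}$ be unimodular matrices with $PF^\top Q=\mathrm{diag}(s_1,\ldots,s_n)$ (a $k\times n$ matrix in Smith normal form, all $s_i\neq 0$), let $P'$ be the submatrix of the first $n$ rows and $P''$ the submatrix of the last $k-n$ rows of $P$, and let $W_i\subset\mathbb{C}^*$ be the group of $s_i$-th roots of unity. Then for every $z=(z_1,\ldots,z_k)\in\mathbb{C}^k\setminus Z$, the orbit $G\cdot z=\{(g_1z_1,\ldots,g_kz_k)\mid g\in G\}$ is parametrized by the map $$\Big(\bigoplus_{i=1}^n W_i\Big)\oplus(\mathbb{C}^* )^{k-n}\to\mathbb{C}^k\setminus Z,\qquad (w,\lambda)\mapsto\big(w^{P'_{:,1}}\lambda^{P''_{:,1}}z_1,\ \ldots,\ w^{P'_{:,k}}\lambda^{P''_{:,k}}z_k\big),$$ i.e. $G\cdot z$ is the image of this map.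
   Context: Notation: for a vector $v$ and integer vector $a$, $v^a=\prod_j v_j^{a_j}$; $P'_{:,i}$ and $P''_{:,i}$ denote the $i$-th columns of $P'$, $P''$. The base locus is $Z=V_{\mathbb{C}^k}(B)$ where $B\subset\mathbb{C}[x_1,\ldots,x_k]$ is the monomial ideal generated by $\prod_{i:\rho_i\not\subset\sigma}x_i$ for $\sigma$ ranging over the $n$-dimensional cones of $\Sigma$. The group $G$ is $G=\{g\in(\mathbb{C}^* )^k\mid g^{F_{1,:}}=\cdots=g^{F_{n,:}}=1\}$, where $F_{j,:}$ is the $j$-th row of $F$; it acts on $\mathbb{C}^k\setminus Z$ by coordinatewise multiplication. The toric variety $X_\Sigma$ is the quotient of $\mathbb{C}^k\setminus Z$ by $G$ via the toric morphism $\pi$ induced by $F$. *)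

theory Defs
  imports Complex_Main "Jordan_Normal_Form.Determinant"
begin

definition Rn :: "nat \<Rightarrow> (nat \<Rightarrow> real) set" where
  "Rn n = {v. \<forall>j\<ge>n. v j = 0}"

definition int_vec :: "nat \<Rightarrow> (nat \<Rightarrow> real) \<Rightarrow> bool" where
  "int_vec n v \<longleftrightarrow> v \<in> Rn n \<and> (\<forall>j. v j \<in> \<int>)"

definition dotp :: "nat \<Rightarrow> (nat \<Rightarrow> real) \<Rightarrow> (nat \<Rightarrow> real) \<Rightarrow> real" where
  "dotp n m v = (\<Sum>j<n. m j * v j)"

definition cone_gen :: "(nat \<Rightarrow> real) set \<Rightarrow> (nat \<Rightarrow> real) set" where
  "cone_gen S = {v. \<exists>c. (\<forall>x\<in>S. 0 \<le> c x) \<and> (\<forall>j. v j = (\<Sum>x\<in>S. c x * x j))}"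

definition rational_polyhedral_cone :: "nat \<Rightarrow> (nat \<Rightarrow> real) set \<Rightarrow> bool" where
  "rational_polyhedral_cone n \<sigma> \<longleftrightarrow>
     (\<exists>S. finite S \<and> (\<forall>x\<in>S. int_vec n x) \<and> \<sigma> = cone_gen S)"

definition strongly_convex :: "(nat \<Rightarrow> real) set \<Rightarrow> bool" where
  "strongly_convex \<sigma> \<longleftrightarrow> \<sigma> \<inter> (\<lambda>v j. - v j) ` \<sigma> = {(\<lambda>j. 0)}"

definition face_of_cone :: "nat \<Rightarrow> (nat \<Rightarrow> real) set \<Rightarrow> (nat \<Rightarrow> real) set \<Rightarrow> bool" where
  "face_of_cone n \<tau> \<sigma> \<longleftrightarrow>
     (\<exists>m\<in>Rn n. (\<forall>v\<in>\<sigma>. 0 \<le> dotp n m v) \<and> \<tau> = {v\<in>\<sigma>. dotp n m v = 0})"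

definition lin_indep :: "nat \<Rightarrow> nat \<Rightarrow> (nat \<Rightarrow> nat \<Rightarrow> real) \<Rightarrow> bool" where
  "lin_indep n d vs \<longleftrightarrow>
     (\<forall>c. (\<forall>j<n. (\<Sum>t<d. c t * vs t j) = 0) \<longrightarrow> (\<forall>t<d. c t = 0))"

definition cone_dim :: "nat \<Rightarrow> (nat \<Rightarrow> real) set \<Rightarrow> nat \<Rightarrow> bool" where
  "cone_dim n \<sigma> d \<longleftrightarrow>
     (\<exists>vs. (\<forall>t<d. vs t \<in> \<sigma>) \<and> lin_indep n d vs) \<and>
     \<not> (\<exists>vs. (\<forall>t<Suc d. vs t \<in> \<sigma>) \<and> lin_indep n (Suc d) vs)"

definition is_fan :: "nat \<Rightarrow> (nat \<Rightarrow> real) set set \<Rightarrow> bool" where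
  "is_fan n \<Sigma> \<longleftrightarrow> finite \<Sigma> \<and>
     (\<forall>\<sigma>\<in>\<Sigma>. rational_polyhedral_cone n \<sigma> \<and> strongly_convex \<sigma>) \<and>
     (\<forall>\<sigma>\<in>\<Sigma>. \<forall>\<tau>. face_of_cone n \<tau> \<sigma> \<longrightarrow> \<tau> \<in> \<Sigma>) \<and>
     (\<forall>\<sigma>1\<in>\<Sigma>. \<forall>\<sigma>2\<in>\<Sigma>. face_of_cone n (\<sigma>1 \<inter> \<sigma>2) \<sigma>1 \<and> face_of_cone n (\<sigma>1 \<inter> \<sigma>2) \<sigma>2)"

definition complete_fan :: "nat \<Rightarrow> (nat \<Rightarrow> real) set set \<Rightarrow> bool" where
  "complete_fan n \<Sigma> \<longleftrightarrow> is_fan n \<Sigma> \<and> \<Union>\<Sigma> = Rn n"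

definition primitive_generator :: "nat \<Rightarrow> (nat \<Rightarrow> real) \<Rightarrow> (nat \<Rightarrow> real) set \<Rightarrow> bool" where
  "primitive_generator n u \<rho> \<longleftrightarrow> int_vec n u \<and> u \<noteq> (\<lambda>j. 0) \<and> u \<in> \<rho> \<and>
     (\<forall>v\<in>\<rho>. int_vec n v \<longrightarrow> (\<exists>m::nat. v = (\<lambda>j. real m * u j)))"

definition col_real :: "int mat \<Rightarrow> nat \<Rightarrow> (nat \<Rightarrow> real)" where
  "col_real F i = (\<lambda>j. if j < dim_row F then real_of_int (F $$ (j, i)) else 0)"

definition base_locus ::
  "nat \<Rightarrow> nat \<Rightarrow> (nat \<Rightarrow> real) set set \<Rightarrow> (nat \<Rightarrow> (nat \<Rightarrow> real) set) \<Rightarrow> complex vec set" where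
  "base_locus n k \<Sigma> \<rho> = {z \<in> carrier_vec k. \<forall>\<sigma>\<in>\<Sigma>. cone_dim n \<sigma> n \<longrightarrow>
       (\<Prod>i\<in>{i. i < k \<and> \<not> \<rho> i \<subseteq> \<sigma>}. z $ i) = 0}"

definition cox_group :: "nat \<Rightarrow> nat \<Rightarrow> int mat \<Rightarrow> complex vec set" where
  "cox_group n k F = {g \<in> carrier_vec k. (\<forall>i<k. g $ i \<noteq> 0) \<and>
       (\<forall>j<n. (\<Prod>i<k. (g $ i) powi (F $$ (j, i))) = 1)}"

definition orbit :: "nat \<Rightarrow> complex vec set \<Rightarrow> complex vec \<Rightarrow> complex vec set" where
  "orbit k G z = (\<lambda>g. vec k (\<lambda>i. g $ i * z $ i)) ` G"

definition param_map ::
  "nat \<Rightarrow> nat \<Rightarrow> int mat \<Rightarrow> complex vec \<Rightarrow> complex vec \<Rightarrow> complex vec \<Rightarrow> complex vec" where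
  "param_map n k P z w lam = vec k (\<lambda>j.
      (\<Prod>i<n. (w $ i) powi (P $$ (i, j))) *
      (\<Prod>i<k - n. (lam $ i) powi (P $$ (n + i, j))) * z $ j)"

definition param_domain :: "nat \<Rightarrow> nat \<Rightarrow> (nat \<Rightarrow> int) \<Rightarrow> (complex vec \<times> complex vec) set" where
  "param_domain n k s = {(w, lam). w \<in> carrier_vec n \<and> (\<forall>i<n. (w $ i) ^ nat (s i) = 1) \<and>
       lam \<in> carrier_vec (k - n) \<and> (\<forall>i<k - n. lam $ i \<noteq> 0)}"

end

theory Submission
  imports Defs
begin

lemma powi_prod: "(\<Prod>i\<in>A. f i) powi m = (\<Prod>i\<in>A. (f i :: complex) powi m)"
proof (cases "finite A")
  case True thus ?thesis by (induction A rule: finite_induct) (auto simp: power_int_mult_distrib)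
qed auto

lemma powi_sum: "(x::complex) \<noteq> 0 \<Longrightarrow> x powi (\<Sum>i\<in>A. f i) = (\<Prod>i\<in>A. x powi f i)"
proof (cases "finite A")
  case True 
  assume x: "x \<noteq> 0"
  from True show ?thesis by (induction A rule: finite_induct) (auto simp: power_int_add x)
qed auto

definition mp :: "nat \<Rightarrow> (nat \<Rightarrow> complex) \<Rightarrow> int mat \<Rightarrow> nat \<Rightarrow> complex" where
  "mp r h A j = (\<Prod>l<r. h l powi (A $$ (l,j)))"

lemma mp_nz: "\<forall>l<r. h l \<noteq> 0 \<Longrightarrow> mp r h A j \<noteq> 0"
  unfolding mp_def by (auto simp: power_int_eq_0_iff)

lemma mp_mult:
  assumes A: "A \<in> carrier_mat r m" and B: "B \<in> carrier_mat m c" and j: "j < c"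
    and h: "\<forall>l<r. h l \<noteq> 0"
  shows "mp m (mp r h A) B j = mp r h (A * B) j"
proof -
  have "mp m (mp r h A) B j = (\<Prod>i<m. \<Prod>l<r. h l powi (A $$ (l,i) * B $$ (i,j)))"
    unfolding mp_def by (simp add: powi_prod power_int_mult)
  also have "\<dots> = (\<Prod>l<r. \<Prod>i<m. h l powi (A $$ (l,i) * B $$ (i,j)))"
    by (rule prod.swap)
  also have "\<dots> = (\<Prod>l<r. h l powi (\<Sum>i<m. A $$ (l,i) * B $$ (i,j)))"
    using h by (simp add: powi_sum)
  also have "\<dots> = mp r h (A * B) j"
    unfolding mp_def using A B j
    by (intro prod.cong refl arg_cong[where f="\<lambda>e. _ powi e"])
       (auto simp: scalar_prod_def atLeast0LessThan)
  finally show ?thesis .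
qed

lemma mp_one: "j < r \<Longrightarrow> mp r h (1\<^sub>m r) j = h j"
proof -
  assume j: "j < r"
  have "mp r h (1\<^sub>m r) j = (\<Prod>l<r. if l = j then h j else 1)"
    unfolding mp_def using j by (intro prod.cong refl) auto
  also have "\<dots> = h j" using j by (simp add: prod.delta)
  finally show ?thesis .
qed

lemma mp_diag: "j < c \<Longrightarrow> c \<le> r \<Longrightarrow> mp r h (mat r c (\<lambda>(i, j). if i = j then s i else 0)) j = h j powi s j"
proof -
  assume j: "j < c" "c \<le> r"
  have "mp r h (mat r c (\<lambda>(i, j). if i = j then s i else 0)) j = (\<Prod>l<r. if l = j then h j powi s j else 1)"
    unfolding mp_def using j by (intro prod.cong refl) auto
  also have "\<dots> = h j powi s j" using j by (simp add: prod.delta)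
  finally show ?thesis .
qed

lemma mp_ones: "\<forall>l<r. h l = 1 \<Longrightarrow> mp r h A j = 1"
  unfolding mp_def by simp

lemma prod_split: "(n::nat) \<le> k \<Longrightarrow> (\<Prod>l<k. f l) = (\<Prod>l<n. f l) * (\<Prod>i<k - n. f (n + i))"
proof -
  assume nk: "n \<le> k"
  have "{..<k} = {..<n} \<union> {n..<k}" using nk by auto
  hence "(\<Prod>l<k. f l) = prod f ({..<n} \<union> {n..<k})" by simp
  also have "\<dots> = (\<Prod>l<n. f l) * (\<Prod>l\<in>{n..<k}. f l)"
    by (rule prod.union_disjoint) auto
  also have "(\<Prod>l\<in>{n..<k}. f l) = (\<Prod>i<k - n. f (n + i))"
    using prod.atLeastLessThan_shift_bounds[of f 0 n "k - n"] nk
    by (simp add: atLeast0LessThan add.commute comp_def)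
  finally show ?thesis .
qed

lemma unimod_inv:
  assumes A: "(A :: int mat) \<in> carrier_mat r r" and d: "det A = 1 \<or> det A = -1"
  shows "\<exists>B. B \<in> carrier_mat r r \<and> A * B = 1\<^sub>m r \<and> B * A = 1\<^sub>m r"
proof (intro exI conjI)
  have dd: "det A * det A = 1" using d by auto
  show "det A \<cdot>\<^sub>m adj_mat A \<in> carrier_mat r r" using adj_mat[OF A] by simp
  show "A * (det A \<cdot>\<^sub>m adj_mat A) = 1\<^sub>m r"
    using adj_mat[OF A] A by (simp add: mult_smult_distrib, intro eq_matI) (auto simp: mult.assoc[symmetric] dd)
  show "(det A \<cdot>\<^sub>m adj_mat A) * A = 1\<^sub>m r"
    using adj_mat[OF A] A by (simp add: mult_smult_assoc_mat, intro eq_matI) (auto simp: mult.assoc[symmetric] dd)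
qed


lemma param_eq:
  assumes nk: "n \<le> k" and w: "\<forall>i<n. w $ i = h i" and lam: "\<forall>i<k-n. lam $ i = h (n + i)"
  shows "param_map n k P z w lam = vec k (\<lambda>j. mp k h P j * z $ j)"
  unfolding param_map_def
proof (intro eq_vecI)
  fix j assume j: "j < dim_vec (vec k (\<lambda>j. mp k h P j * z $ j))"
  have "(\<Prod>i<n. (w $ i) powi (P $$ (i, j))) = (\<Prod>i<n. h i powi (P $$ (i, j)))"
    using w by (intro prod.cong) auto
  moreover have "(\<Prod>i<k - n. (lam $ i) powi (P $$ (n + i, j))) = (\<Prod>i<k-n. h (n+i) powi (P $$ (n + i, j)))"
    using lam by (intro prod.cong) auto
  ultimately show "vec k (\<lambda>j. (\<Prod>i<n. w $ i powi P $$ (i, j)) * (\<Prod>i<k - n. lam $ i powi P $$ (n + i, j)) * z $ j) $ j =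
         vec k (\<lambda>j. mp k h P j * z $ j) $ j"
    using j prod_split[OF nk, of "\<lambda>l. h l powi P $$ (l, j)"] by (simp add: mp_def)
qed auto

subsection \<open>Geometry: Farkas lemma\<close>

lemma dotp_comm: "dotp n u v = dotp n v u"
  unfolding dotp_def by (simp add: mult.commute)

lemma dotp_lin_left: "dotp n (\<lambda>j. u j - t * v j) w = dotp n u w - t * dotp n v w"
  unfolding dotp_def by (simp add: algebra_simps sum_subtractf sum_distrib_left)

lemma dotp_lin_right: "dotp n w (\<lambda>j. u j - t * v j) = dotp n w u - t * dotp n w v"
  unfolding dotp_def by (simp add: algebra_simps sum_subtractf sum_distrib_left)

lemma dotp_neg_left: "dotp n (\<lambda>j. - u j) w = - dotp n u w"
  unfolding dotp_def by (simp add: sum_negf)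

lemma dotp_neg_right: "dotp n w (\<lambda>j. - u j) = - dotp n w u"
  unfolding dotp_def by (simp add: sum_negf)

definition icone :: "nat \<Rightarrow> nat \<Rightarrow> (nat \<Rightarrow> nat \<Rightarrow> real) \<Rightarrow> (nat \<Rightarrow> real) \<Rightarrow> bool" where
  "icone n N a b \<longleftrightarrow> (\<exists>c. (\<forall>i<N. 0 \<le> c i) \<and> (\<forall>j<n. b j = (\<Sum>i<N. c i * a i j)))"

lemma farkas_idx:
  "\<not> icone n N a b \<Longrightarrow> \<exists>y. (\<forall>i<N. dotp n y (a i) \<ge> 0) \<and> dotp n y b < 0"
proof (induction N arbitrary: a b)
  case 0
  then obtain j where j: "j < n" "b j \<noteq> 0" unfolding icone_def by auto
  have bb: "0 < b j * b j" using j(2) by (metis not_real_square_gt_zero)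
  have "0 < (\<Sum>j<n. b j * b j)"
    by (rule sum_pos2[of _ j]) (use j bb in auto)
  hence "dotp n (\<lambda>j. - b j) b < 0" unfolding dotp_def by (simp add: sum_negf)
  thus ?case by auto
next
  case (Suc N)
  have nc: "\<not> icone n N a b"
  proof
    assume "icone n N a b"
    then obtain c where c: "\<forall>i<N. 0 \<le> c i" "\<forall>j<n. b j = (\<Sum>i<N. c i * a i j)"
      unfolding icone_def by auto
    have "icone n (Suc N) a b" unfolding icone_def
      by (rule exI[of _ "\<lambda>i. if i < N then c i else 0"]) (use c in auto)
    thus False using Suc.prems by simp
  qed
  from Suc.IH[OF nc] obtain y where y: "\<forall>i<N. dotp n y (a i) \<ge> 0" "dotp n y b < 0" by blast
  show ?case
  proof (cases "dotp n y (a N) \<ge> 0")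
    case True
    thus ?thesis using y by (intro exI[of _ y]) (auto simp: less_Suc_eq)
  next
    case False
    define \<alpha> where "\<alpha> = dotp n y (a N)"
    have \<alpha>: "\<alpha> < 0" using False unfolding \<alpha>_def by simp
    define a' where "a' = (\<lambda>i j. a i j - (dotp n y (a i) / \<alpha>) * a N j)"
    define b' where "b' = (\<lambda>j. b j - (dotp n y b / \<alpha>) * a N j)"
    have nc': "\<not> icone n N a' b'"
    proof
      assume "icone n N a' b'"
      then obtain c where c: "\<forall>i<N. 0 \<le> c i" "\<forall>j<n. b' j = (\<Sum>i<N. c i * a' i j)"
        unfolding icone_def by auto
      define cN where "cN = (dotp n y b - (\<Sum>i<N. c i * dotp n y (a i))) / \<alpha>"
      have "(\<Sum>i<N. c i * dotp n y (a i)) \<ge> 0" using c y by (intro sum_nonneg) auto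
      hence "cN \<ge> 0" unfolding cN_def using \<alpha> y(2) by (intro divide_nonpos_neg) auto
      have "icone n (Suc N) a b" unfolding icone_def
      proof (rule exI[of _ "\<lambda>i. if i < N then c i else cN"], intro conjI allI impI)
        fix i assume "i < Suc N" thus "0 \<le> (if i < N then c i else cN)" using c \<open>cN \<ge> 0\<close> by auto
      next
        fix j assume j: "j < n"
        have "(\<Sum>i<Suc N. (if i < N then c i else cN) * a i j) = (\<Sum>i<N. c i * a i j) + cN * a N j"
          by simp
        also have "(\<Sum>i<N. c i * a i j) = b' j + (\<Sum>i<N. c i * dotp n y (a i)) / \<alpha> * a N j"
          using c(2) j unfolding a'_def
          by (simp add: algebra_simps sum_subtractf sum_distrib_left sum_distrib_right sum_divide_distrib)
        finally show "b j = (\<Sum>i<Suc N. (if i < N then c i else cN) * a i j)"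
          unfolding b'_def cN_def using \<alpha> by (simp add: field_simps)
      qed
      thus False using Suc.prems by simp
    qed
    from Suc.IH[OF nc'] obtain y' where y': "\<forall>i<N. dotp n y' (a' i) \<ge> 0" "dotp n y' b' < 0" by blast
    define y'' where "y'' = (\<lambda>j. y' j - (dotp n y' (a N) / \<alpha>) * y j)"
    have "\<forall>i<Suc N. dotp n y'' (a i) \<ge> 0"
    proof (intro allI impI)
      fix i assume i: "i < Suc N"
      show "dotp n y'' (a i) \<ge> 0"
      proof (cases "i < N")
        case True
        have "dotp n y'' (a i) = dotp n y' (a' i)"
          unfolding y''_def a'_def dotp_lin_left dotp_lin_right
          by (simp add: dotp_comm[of n y] \<alpha>_def)
        thus ?thesis using y' True by simp
      next
        case False
        hence "i = N" using i by simp
        thus ?thesis unfolding y''_def dotp_lin_left using \<alpha> by (simp add: \<alpha>_def)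
      qed
    qed
    moreover have "dotp n y'' b < 0"
    proof -
      have "dotp n y'' b = dotp n y' b'"
        unfolding y''_def b'_def dotp_lin_left dotp_lin_right
        by (simp add: dotp_comm[of n y] \<alpha>_def)
      thus ?thesis using y' by simp
    qed
    ultimately show ?thesis by blast
  qed
qed

lemma cone_dotp: "\<forall>j. p j = (\<Sum>x\<in>S. c x * x j) \<Longrightarrow> dotp n g p = (\<Sum>x\<in>S. c x * dotp n g x)"
proof -
  assume p: "\<forall>j. p j = (\<Sum>x\<in>S. c x * x j)"
  have "dotp n g p = (\<Sum>j<n. \<Sum>x\<in>S. c x * (g j * x j))"
    unfolding dotp_def using p by (simp add: sum_distrib_left mult.left_commute)
  also have "\<dots> = (\<Sum>x\<in>S. \<Sum>j<n. c x * (g j * x j))" by (rule sum.swap)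
  also have "\<dots> = (\<Sum>x\<in>S. c x * dotp n g x)" unfolding dotp_def by (simp add: sum_distrib_left)
  finally show ?thesis .
qed

lemma cone_nonneg: "p \<in> cone_gen S \<Longrightarrow> \<forall>x\<in>S. dotp n g x \<ge> 0 \<Longrightarrow> dotp n g p \<ge> 0"
proof -
  assume p: "p \<in> cone_gen S" and g: "\<forall>x\<in>S. dotp n g x \<ge> 0"
  then obtain c where c: "\<forall>x\<in>S. 0 \<le> c x" "\<forall>j. p j = (\<Sum>x\<in>S. c x * x j)"
    unfolding cone_gen_def by auto
  show ?thesis unfolding cone_dotp[OF c(2)] using c g by (intro sum_nonneg) auto
qed

lemma mem_cone: "x \<in> S \<Longrightarrow> finite S \<Longrightarrow> x \<in> cone_gen S"
  unfolding cone_gen_def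
proof (intro CollectI exI[of _ "\<lambda>y. if y = x then 1 else 0"] conjI allI)
  fix j assume x: "x \<in> S" and fin: "finite S"
  have "(\<Sum>y\<in>S. (if y = x then 1 else 0) * y j) = (\<Sum>y\<in>S. if y = x then x j else 0)"
    by (intro sum.cong) auto
  also have "\<dots> = x j" using x fin by (simp add: sum.delta')
  finally show "x j = (\<Sum>y\<in>S. (if y = x then 1 else 0) * y j)" by simp
qed auto

lemma dotp_trunc: "dotp n (\<lambda>j. if j < n then y j else 0) v = dotp n y v"
  unfolding dotp_def by (intro sum.cong) auto

lemma farkas_set:
  assumes fin: "finite S" and SR: "S \<subseteq> Rn n" and b: "b \<in> Rn n" and nb: "b \<notin> cone_gen S"
  shows "\<exists>y\<in>Rn n. (\<forall>x\<in>S. dotp n y x \<ge> 0) \<and> dotp n y b < 0"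
proof -
  obtain e where e: "bij_betw e {0..<card S} S" using ex_bij_betw_nat_finite[OF fin] by blast
  define N where "N = card S"
  have inj: "inj_on e {0..<N}" using e unfolding N_def bij_betw_def by auto
  have img: "e ` {0..<N} = S" using e unfolding N_def bij_betw_def by auto
  have "\<not> icone n N e b"
  proof
    assume "icone n N e b"
    then obtain c where c: "\<forall>i<N. 0 \<le> c i" "\<forall>j<n. b j = (\<Sum>i<N. c i * e i j)"
      unfolding icone_def by auto
    define cc where "cc = (\<lambda>x. c (inv_into {0..<N} e x))"
    have "b \<in> cone_gen S" unfolding cone_gen_def
    proof (intro CollectI exI[of _ cc] conjI ballI allI)
      fix x assume "x \<in> S"
      hence "inv_into {0..<N} e x \<in> {0..<N}" using img by (metis inv_into_into)
      thus "0 \<le> cc x" unfolding cc_def using c by auto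
    next
      fix j
      show "b j = (\<Sum>x\<in>S. cc x * x j)"
      proof (cases "j < n")
        case True
        have "(\<Sum>x\<in>S. cc x * x j) = (\<Sum>i\<in>{0..<N}. cc (e i) * e i j)"
          using sum.reindex_bij_betw[OF e[folded N_def], of "\<lambda>x. cc x * x j"] by simp
        also have "\<dots> = (\<Sum>i<N. c i * e i j)"
          unfolding cc_def atLeast0LessThan using inj
          by (intro sum.cong) (auto simp: atLeast0LessThan)
        finally show ?thesis using c True by simp
      next
        case False
        have "(\<Sum>x\<in>S. cc x * x j) = 0" using SR False by (intro sum.neutral) (auto simp: Rn_def)
        thus ?thesis using b False by (simp add: Rn_def)
      qed
    qed
    thus False using nb by simp
  qed
  from farkas_idx[OF this] obtain y where y: "\<forall>i<N. dotp n y (e i) \<ge> 0" "dotp n y b < 0" by blast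
  define ty where "ty = (\<lambda>j. if j < n then y j else 0)"
  show ?thesis
  proof (intro bexI[of _ ty] conjI ballI)
    show "ty \<in> Rn n" unfolding ty_def Rn_def by auto
    show "dotp n ty b < 0" unfolding ty_def dotp_trunc using y by simp
    fix x assume "x \<in> S"
    then obtain i where "i < N" "x = e i" using img by auto
    thus "dotp n ty x \<ge> 0" unfolding ty_def dotp_trunc using y by simp
  qed
qed

lemma dotp_sum_left: "dotp n (\<lambda>j. \<Sum>x\<in>A. Y x j) v = (\<Sum>x\<in>A. dotp n (Y x) v)"
  unfolding dotp_def by (simp add: sum_distrib_right sum.swap[of _ A])

lemma gordan:
  assumes fin: "finite S" and SR: "S \<subseteq> Rn n" and sc: "strongly_convex (cone_gen S)"
  shows "\<exists>y\<in>Rn n. \<forall>x\<in>S. x \<noteq> (\<lambda>j. 0) \<longrightarrow> dotp n y x > 0"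
proof -
  define S' where "S' = {x\<in>S. x \<noteq> (\<lambda>j. 0)}"
  have "\<forall>x\<in>S'. \<exists>y. y \<in> Rn n \<and> (\<forall>x'\<in>S. dotp n y x' \<ge> 0) \<and> dotp n y x > 0"
  proof
    fix x assume x: "x \<in> S'"
    have xR: "(\<lambda>j. - x j) \<in> Rn n" using x SR unfolding S'_def Rn_def by auto
    have "(\<lambda>j. - x j) \<notin> cone_gen S"
    proof
      assume a: "(\<lambda>j. - x j) \<in> cone_gen S"
      have "x \<in> cone_gen S" using x fin mem_cone unfolding S'_def by auto
      moreover have "x \<in> (\<lambda>v j. - v j) ` cone_gen S"
        using a by (intro image_eqI[of _ _ "\<lambda>j. - x j"]) auto
      ultimately have "x \<in> {(\<lambda>j. 0)}" using sc unfolding strongly_convex_def by blast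
      thus False using x unfolding S'_def by auto
    qed
    from farkas_set[OF fin SR xR this] obtain y where
      "y \<in> Rn n" "\<forall>x'\<in>S. dotp n y x' \<ge> 0" "dotp n y (\<lambda>j. - x j) < 0" by blast
    thus "\<exists>y. y \<in> Rn n \<and> (\<forall>x'\<in>S. dotp n y x' \<ge> 0) \<and> dotp n y x > 0"
      by (intro exI[of _ y]) (auto simp: dotp_neg_right)
  qed
  then obtain Y where Y: "\<forall>x\<in>S'. Y x \<in> Rn n \<and> (\<forall>x'\<in>S. dotp n (Y x) x' \<ge> 0) \<and> dotp n (Y x) x > 0"
    by metis
  have finS': "finite S'" using fin unfolding S'_def by auto
  show ?thesis
  proof (intro bexI[of _ "\<lambda>j. \<Sum>x\<in>S'. Y x j"] ballI impI)
    show "(\<lambda>j. \<Sum>x\<in>S'. Y x j) \<in> Rn n" using Y unfolding Rn_def by auto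
    fix t assume t: "t \<in> S" "t \<noteq> (\<lambda>j. 0)"
    hence tS': "t \<in> S'" unfolding S'_def by auto
    show "dotp n (\<lambda>j. \<Sum>x\<in>S'. Y x j) t > 0" unfolding dotp_sum_left
      by (rule sum_pos2[OF finS' tS']) (use Y t tS' in \<open>auto simp: S'_def\<close>)
  qed
qed

lemma face_max:
  assumes fin: "finite S" and y: "y \<in> Rn n" and ypos: "\<forall>x\<in>S. x \<noteq> (\<lambda>j. 0) \<longrightarrow> dotp n y x > 0"
    and h: "h \<in> Rn n" and t1: "t1 \<in> S" "t1 \<noteq> (\<lambda>j. 0)"
    and mx: "\<forall>x\<in>S. x \<noteq> (\<lambda>j. 0) \<longrightarrow> dotp n h x / dotp n y x \<le> dotp n h t1 / dotp n y t1"
    and x: "x \<in> S" "x \<noteq> (\<lambda>j. 0)" "dotp n h x / dotp n y x < dotp n h t1 / dotp n y t1"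
  shows "\<exists>g. face_of_cone n {v\<in>cone_gen S. dotp n g v = 0} (cone_gen S) \<and> dotp n g t1 = 0 \<and> dotp n g x \<noteq> 0"
proof -
  define M where "M = dotp n h t1 / dotp n y t1"
  define g where "g = (\<lambda>j. M * y j - h j)"
  have gd: "dotp n g v = M * dotp n y v - dotp n h v" for v
    unfolding g_def dotp_def by (simp add: algebra_simps sum_subtractf sum_distrib_left)
  have gS: "\<forall>v\<in>S. dotp n g v \<ge> 0"
  proof
    fix v assume v: "v \<in> S"
    show "dotp n g v \<ge> 0"
    proof (cases "v = (\<lambda>j. 0)")
      case True thus ?thesis unfolding gd by (simp add: dotp_def)
    next
      case False
      hence "dotp n h v / dotp n y v \<le> M" "dotp n y v > 0" using mx ypos v unfolding M_def by auto
      hence "dotp n h v \<le> M * dotp n y v" by (simp add: pos_divide_le_eq)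
      thus ?thesis unfolding gd by simp
    qed
  qed
  have gR: "g \<in> Rn n" using y h unfolding g_def Rn_def by auto
  show ?thesis
  proof (intro exI[of _ g] conjI)
    show "face_of_cone n {v\<in>cone_gen S. dotp n g v = 0} (cone_gen S)"
      unfolding face_of_cone_def using gR cone_nonneg[OF _ gS] by blast
    have yt1: "dotp n y t1 > 0" using ypos t1 by auto
    show "dotp n g t1 = 0" unfolding gd M_def using yt1 by simp
    have yx: "dotp n y x > 0" using ypos x by auto
    have "dotp n h x < M * dotp n y x" using x(3) yx unfolding M_def by (simp add: pos_divide_less_eq)
    thus "dotp n g x \<noteq> 0" unfolding gd by simp
  qed
qed

lemma ex_max: "finite A \<Longrightarrow> A \<noteq> {} \<Longrightarrow> \<exists>a\<in>A. \<forall>x\<in>A. (f x :: real) \<le> f a"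
proof (induction A rule: finite_ne_induct)
  case (insert x F)
  then obtain a where a: "a \<in> F" "\<forall>x\<in>F. f x \<le> f a" by blast
  show ?case
  proof (cases "f x \<le> f a")
    case True thus ?thesis using a by auto
  next
    case False thus ?thesis using a by (intro bexI[of _ x]) auto
  qed
qed auto

lemma ex_min: "finite A \<Longrightarrow> A \<noteq> {} \<Longrightarrow> \<exists>a\<in>A. \<forall>x\<in>A. (f a :: real) \<le> f x"
  using ex_max[of A "\<lambda>x. - f x"] by auto

lemma rays_span:
  assumes fan: "complete_fan n \<Sigma>"
    and rays: "{\<sigma>\<in>\<Sigma>. cone_dim n \<sigma> 1} = \<rho> ` {..<k}"
    and prim: "\<forall>i<k. primitive_generator n (col_real F i) (\<rho> i)"
    and m: "m \<in> Rn n" "m \<noteq> (\<lambda>j. 0)"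
  shows "\<exists>i<k. dotp n m (col_real F i) \<noteq> 0"
proof -
  have finS: "finite \<Sigma>" and cones: "\<forall>\<sigma>\<in>\<Sigma>. rational_polyhedral_cone n \<sigma> \<and> strongly_convex \<sigma>"
    and faces: "\<forall>\<sigma>\<in>\<Sigma>. \<forall>\<tau>. face_of_cone n \<tau> \<sigma> \<longrightarrow> \<tau> \<in> \<Sigma>" and cov: "\<Union>\<Sigma> = Rn n"
    using fan unfolding complete_fan_def is_fan_def by auto
  obtain j0 where j0: "j0 < n" "m j0 \<noteq> 0"
  proof -
    have "\<exists>j<n. m j \<noteq> 0"
    proof (rule ccontr)
      assume "\<not> (\<exists>j<n. m j \<noteq> 0)"
      hence "m = (\<lambda>j. 0)" using m(1) unfolding Rn_def by (auto simp: not_less)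
      thus False using m(2) by simp
    qed
    thus ?thesis using that by blast
  qed
  have mm0: "0 < m j0 * m j0" using j0(2) by (metis not_real_square_gt_zero)
  have mm: "dotp n m m > 0" unfolding dotp_def
    by (rule sum_pos2[of _ j0]) (use j0 mm0 in auto)
  obtain \<sigma>0 where \<sigma>0: "\<sigma>0 \<in> \<Sigma>" "m \<in> \<sigma>0" using m(1) cov by auto
  define A where "A = {\<sigma>\<in>\<Sigma>. \<exists>x\<in>\<sigma>. dotp n m x \<noteq> 0}"
  have "\<sigma>0 \<in> A" unfolding A_def using \<sigma>0 mm by force
  moreover have "finite A" unfolding A_def using finS by auto
  ultimately obtain \<tau> where \<tau>A: "\<tau> \<in> A" and \<tau>min: "\<forall>b\<in>A. b \<subseteq> \<tau> \<longrightarrow> \<tau> = b"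
    using finite_has_minimal2[of A \<sigma>0] by blast
  have \<tau>\<Sigma>: "\<tau> \<in> \<Sigma>" using \<tau>A unfolding A_def by auto
  obtain S where finS: "finite S" and Sint: "\<forall>x\<in>S. int_vec n x" and \<tau>S: "\<tau> = cone_gen S"
    using cones \<tau>\<Sigma> unfolding rational_polyhedral_cone_def by blast
  have SR: "S \<subseteq> Rn n" using Sint unfolding int_vec_def by auto
  have sc: "strongly_convex (cone_gen S)" using cones \<tau>\<Sigma> \<tau>S by auto
  obtain x0 where x0: "x0 \<in> \<tau>" "dotp n m x0 \<noteq> 0" using \<tau>A unfolding A_def by auto
  obtain t0 where t0: "t0 \<in> S" "dotp n m t0 \<noteq> 0"
  proof -
    obtain c where c: "\<forall>j. x0 j = (\<Sum>x\<in>S. c x * x j)" using x0 \<tau>S unfolding cone_gen_def by auto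
    have "(\<Sum>x\<in>S. c x * dotp n m x) \<noteq> 0" using x0(2) cone_dotp[OF c] by simp
    then obtain t where "t \<in> S" "c t * dotp n m t \<noteq> 0" by (meson sum.neutral)
    thus ?thesis using that by auto
  qed
  have dz: "dotp n g (\<lambda>j. 0) = 0" for g unfolding dotp_def by simp
  have t0nz: "t0 \<noteq> (\<lambda>j. 0)" using t0 dz by auto
  obtain y where yR: "y \<in> Rn n" and ypos: "\<forall>x\<in>S. x \<noteq> (\<lambda>j. 0) \<longrightarrow> dotp n y x > 0"
    using gordan[OF finS SR sc] by blast
  define S' where "S' = {x\<in>S. x \<noteq> (\<lambda>j. 0)}"
  have finS': "finite S'" and t0S': "t0 \<in> S'" and S'ne: "S' \<noteq> {}"
    using finS t0 t0nz unfolding S'_def by auto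
  define R where "R = (\<lambda>h x. dotp n h x / dotp n y x)"
  have no2: "\<not> (\<exists>vs. (\<forall>t<Suc 1. vs t \<in> \<tau>) \<and> lin_indep n (Suc 1) vs)"
  proof
    assume "\<exists>vs. (\<forall>t<Suc 1. vs t \<in> \<tau>) \<and> lin_indep n (Suc 1) vs"
    then obtain vs where vs: "vs 0 \<in> \<tau>" "vs 1 \<in> \<tau>" and li: "lin_indep n (Suc 1) vs" by auto
    have wit: "\<exists>h t1 x. h \<in> Rn n \<and> t1 \<in> S' \<and> (\<forall>x'\<in>S'. R h x' \<le> R h t1) \<and> x \<in> S' \<and> R h x < R h t1
                \<and> dotp n m t1 \<noteq> 0"
    proof (cases "\<exists>x2\<in>S'. R m x2 \<noteq> R m t0")
      case True
      then obtain x2 where x2: "x2 \<in> S'" "R m x2 \<noteq> R m t0" by blast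
      obtain tmax where tmax: "tmax \<in> S'" "\<forall>x\<in>S'. R m x \<le> R m tmax" using ex_max[OF finS' S'ne] by blast
      obtain tmin where tmin: "tmin \<in> S'" "\<forall>x\<in>S'. R m tmin \<le> R m x" using ex_min[OF finS' S'ne] by blast
      have lt: "R m tmin < R m tmax"
      proof -
        have "R m tmin \<le> R m x2" "R m tmin \<le> R m t0" "R m x2 \<le> R m tmax" "R m t0 \<le> R m tmax"
          using tmin tmax x2 t0S' by auto
        thus ?thesis using x2(2) by linarith
      qed
      show ?thesis
      proof (cases "R m tmax = 0")
        case False
        hence "dotp n m tmax \<noteq> 0" unfolding R_def by auto
        thus ?thesis using m(1) tmax tmin lt by blast
      next
        case True
        define h where "h = (\<lambda>j. - m j)"
        have Rh: "R h x = - R m x" for x unfolding R_def h_def dotp_neg_left by simp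
        have "h \<in> Rn n" using m(1) unfolding h_def Rn_def by auto
        moreover have "\<forall>x'\<in>S'. R h x' \<le> R h tmin" using tmin unfolding Rh by auto
        moreover have "R h tmax < R h tmin" using lt unfolding Rh by simp
        moreover have "dotp n m tmin \<noteq> 0" using lt True unfolding R_def by auto
        ultimately show ?thesis using tmin tmax by blast
      qed
    next
      case False
      hence const: "\<forall>x\<in>S'. R m x = R m t0" by auto
      have ne: "R m t0 \<noteq> 0" using t0 ypos t0nz unfolding R_def by auto
      define e :: "nat \<Rightarrow> nat \<Rightarrow> real" where "e = (\<lambda>j i. if i = j then 1 else 0)"
      have de: "dotp n (e j) v = v j" if "j < n" for j v
      proof -
        have "dotp n (e j) v = (\<Sum>i<n. if i = j then v j else 0)"
          unfolding dotp_def e_def by (intro sum.cong) auto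
        thus ?thesis using that by simp
      qed
      have "\<exists>j<n. \<exists>x2\<in>S'. R (e j) x2 \<noteq> R (e j) t0"
      proof (rule ccontr)
        assume "\<not> (\<exists>j<n. \<exists>x2\<in>S'. R (e j) x2 \<noteq> R (e j) t0)"
        hence allc: "\<forall>j<n. \<forall>x2\<in>S'. R (e j) x2 = R (e j) t0" by auto
        define \<mu> where "\<mu> = (\<lambda>x. dotp n y x / dotp n y t0)"
        have yt0: "dotp n y t0 > 0" using ypos t0 t0nz by auto
        have propm: "\<forall>x\<in>S. \<forall>j<n. x j = \<mu> x * t0 j"
        proof (intro ballI allI impI)
          fix x j assume x: "x \<in> S" and j: "j < n"
          show "x j = \<mu> x * t0 j"
          proof (cases "x = (\<lambda>j. 0)")
            case True thus ?thesis unfolding \<mu>_def by (simp add: dz)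
          next
            case False
            hence xS': "x \<in> S'" and yx: "dotp n y x > 0" using x ypos unfolding S'_def by auto
            have "R (e j) x = R (e j) t0" using allc j xS' by auto
            hence "x j / dotp n y x = t0 j / dotp n y t0"
              unfolding R_def de[OF j] by simp
            thus ?thesis unfolding \<mu>_def using yx yt0 by (simp add: field_simps)
          qed
        qed
        have inline: "\<exists>a. \<forall>j<n. v j = a * t0 j" if v: "v \<in> \<tau>" for v
        proof -
          obtain c where c: "\<forall>j. v j = (\<Sum>x\<in>S. c x * x j)" using v \<tau>S unfolding cone_gen_def by auto
          show ?thesis
          proof (intro exI[of _ "\<Sum>x\<in>S. c x * \<mu> x"] allI impI)
            fix j assume j: "j < n"
            have "v j = (\<Sum>x\<in>S. c x * (\<mu> x * t0 j))" using c propm j by (simp cong: sum.cong)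
            thus "v j = (\<Sum>x\<in>S. c x * \<mu> x) * t0 j" by (simp add: sum_distrib_right mult.assoc)
          qed
        qed
        obtain a0 where a0: "\<forall>j<n. vs 0 j = a0 * t0 j" using inline[OF vs(1)] by blast
        obtain a1 where a1: "\<forall>j<n. vs 1 j = a1 * t0 j" using inline[OF vs(2)] by blast
        have a1': "\<forall>j<n. vs (Suc 0) j = a1 * t0 j" using a1 by simp
        have lc: "(\<forall>j<n. (\<Sum>t<Suc 1. cc t * vs t j) = 0) \<Longrightarrow> (\<forall>t<Suc 1. cc t = 0)" for cc
          using li unfolding lin_indep_def by blast
        have "\<forall>j<n. (\<Sum>t<Suc 1. (if t = 0 then a1 else - a0) * vs t j) = 0"
          using a0 a1' by simp
        from lc[OF this] have "a1 = 0" "a0 = 0" by (auto dest: spec[of _ 0] spec[of _ 1])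
        moreover have "\<forall>j<n. (\<Sum>t<Suc 1. (if t = 0 then (1::real) else 0) * vs t j) = 0"
          using a0 \<open>a0 = 0\<close> by simp
        from lc[OF this] have "(1::real) = 0" by (auto dest: spec[of _ 0])
        ultimately show False by auto
      qed
      then obtain j x2 where j: "j < n" and x2: "x2 \<in> S'" "R (e j) x2 \<noteq> R (e j) t0" by blast
      obtain tmax where tmax: "tmax \<in> S'" "\<forall>x\<in>S'. R (e j) x \<le> R (e j) tmax"
        using ex_max[OF finS' S'ne] by blast
      obtain tmin where tmin: "tmin \<in> S'" "\<forall>x\<in>S'. R (e j) tmin \<le> R (e j) x"
        using ex_min[OF finS' S'ne] by blast
      have lt: "R (e j) tmin < R (e j) tmax"
      proof -
        have "R (e j) tmin \<le> R (e j) x2" "R (e j) tmin \<le> R (e j) t0" "R (e j) x2 \<le> R (e j) tmax"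
          "R (e j) t0 \<le> R (e j) tmax"
          using tmin tmax x2 t0S' by auto
        thus ?thesis using x2(2) by linarith
      qed
      have "e j \<in> Rn n" using j unfolding e_def Rn_def by auto
      moreover have "dotp n m tmax \<noteq> 0"
        using const tmax ne unfolding R_def by auto
      ultimately show ?thesis using tmax tmin lt by blast
    qed
    then obtain h t1 x where h: "h \<in> Rn n" and t1: "t1 \<in> S'" and mx: "\<forall>x'\<in>S'. R h x' \<le> R h t1"
      and x: "x \<in> S'" "R h x < R h t1" and mt1: "dotp n m t1 \<noteq> 0" by blast
    obtain g where g: "face_of_cone n {v\<in>cone_gen S. dotp n g v = 0} (cone_gen S)"
      "dotp n g t1 = 0" "dotp n g x \<noteq> 0"
      using face_max[OF finS yR ypos h, of t1 x] t1 mx x unfolding S'_def R_def by auto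
    define Fc where "Fc = {v\<in>cone_gen S. dotp n g v = 0}"
    have "Fc \<in> \<Sigma>" using faces \<tau>\<Sigma> g(1) \<tau>S unfolding Fc_def by auto
    moreover have "t1 \<in> Fc" using t1 g(2) mem_cone[OF _ finS] unfolding Fc_def S'_def by auto
    ultimately have "Fc \<in> A" using mt1 unfolding A_def by auto
    moreover have "Fc \<subseteq> \<tau>" unfolding Fc_def \<tau>S by auto
    ultimately have "\<tau> = Fc" using \<tau>min by auto
    moreover have "x \<in> \<tau>" using x mem_cone[OF _ finS] \<tau>S unfolding S'_def by auto
    ultimately show False using g(3) unfolding Fc_def by auto
  qed
  obtain j1 where j1: "j1 < n" "t0 j1 \<noteq> 0"
  proof -
    have "\<exists>j<n. t0 j \<noteq> 0"
    proof (rule ccontr)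
      assume "\<not> (\<exists>j<n. t0 j \<noteq> 0)"
      hence "dotp n m t0 = 0" unfolding dotp_def by auto
      thus False using t0 by simp
    qed
    thus ?thesis using that by blast
  qed
  have t0\<tau>: "t0 \<in> \<tau>" using mem_cone[OF t0(1) finS] \<tau>S by simp
  have "cone_dim n \<tau> 1" unfolding cone_dim_def
  proof (intro conjI)
    show "\<exists>vs. (\<forall>t<1. vs t \<in> \<tau>) \<and> lin_indep n 1 vs"
    proof (intro exI[of _ "\<lambda>_. t0"] conjI)
      show "\<forall>t<1. t0 \<in> \<tau>" using t0\<tau> by simp
      show "lin_indep n 1 (\<lambda>_. t0)" unfolding lin_indep_def
      proof (intro allI impI)
        fix c :: "nat \<Rightarrow> real" and t :: nat assume "\<forall>j<n. (\<Sum>t<1. c t * t0 j) = 0" "t < 1"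
        thus "c t = 0" using j1 by auto
      qed
    qed
    show "\<not> (\<exists>vs. (\<forall>t<Suc 1. vs t \<in> \<tau>) \<and> lin_indep n (Suc 1) vs)" by (rule no2)
  qed
  hence "\<tau> \<in> \<rho> ` {..<k}" using rays \<tau>\<Sigma> by blast
  then obtain i where i: "i < k" "\<tau> = \<rho> i" by auto
  have "int_vec n t0" using Sint t0 by auto
  then obtain m' :: nat where m': "t0 = (\<lambda>j. real m' * col_real F i j)"
    using prim i t0\<tau> unfolding primitive_generator_def by auto
  have "dotp n m t0 = real m' * dotp n m (col_real F i)"
    unfolding m' dotp_def by (simp add: sum_distrib_left mult.left_commute)
  hence "dotp n m (col_real F i) \<noteq> 0" using t0 by auto
  thus ?thesis using i by blast
qed

lemma k_ge_n:
  assumes span: "\<And>m. m \<in> Rn n \<Longrightarrow> m \<noteq> (\<lambda>j. 0) \<Longrightarrow> \<exists>i<k. dotp n m (col_real F i) \<noteq> 0"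
    and F: "F \<in> carrier_mat n k"
    and P: "P \<in> carrier_mat k k" "det P = 1 \<or> det P = -1"
    and Q: "Q \<in> carrier_mat n n" "det Q = 1 \<or> det Q = -1"
    and snf: "P * transpose_mat F * Q = mat k n (\<lambda>(i, j). if i = j then s i else 0)"
  shows "n \<le> k"
proof (rule ccontr)
  assume "\<not> n \<le> k"
  hence kn: "k < n" by simp
  define c where "c = n - 1"
  have c: "c < n" "k \<le> c" using kn unfolding c_def by auto
  have FT: "transpose_mat F \<in> carrier_mat k n" using F by simp
  define B where "B = transpose_mat F * Q"
  have B: "B \<in> carrier_mat k n" unfolding B_def using FT Q by simp
  define v where "v = col B c"
  have "dim_vec v = k" unfolding v_def using B by simp
  hence vc: "v \<in> carrier_vec k" by (rule carrier_vecI)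
  have "P * B = P * transpose_mat F * Q"
    unfolding B_def by (rule assoc_mult_mat[symmetric, OF P(1) FT Q(1)])
  hence "P * B = mat k n (\<lambda>(i, j). if i = j then s i else 0)" using snf by simp
  hence "col (P * B) c = col (mat k n (\<lambda>(i, j). if i = j then s i else 0)) c" by simp
  hence Pv: "P *\<^sub>v v = 0\<^sub>v k" unfolding v_def using col_mult2[OF P(1) B c(1)] c
    by (auto intro!: eq_vecI)
  have "det P \<noteq> 0" using P(2) by auto
  hence v0: "v = 0\<^sub>v k" using det_0_iff_vec_prod_zero[OF P(1)] vc Pv by blast
  define m where "m = (\<lambda>j. if j < n then real_of_int (Q $$ (j, c)) else 0)"
  have mR: "m \<in> Rn n" unfolding m_def Rn_def by auto
  have m0: "m \<noteq> (\<lambda>j. 0)"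
  proof
    assume m0: "m = (\<lambda>j. 0)"
    have "Q *\<^sub>v unit_vec n c = 0\<^sub>v n"
    proof (rule eq_vecI)
      fix j assume j: "j < dim_vec (0\<^sub>v n :: int vec)"
      have "(Q *\<^sub>v unit_vec n c) $ j = Q $$ (j, c)" using Q(1) j c by simp
      also have "\<dots> = 0" using fun_cong[OF m0, of j] j unfolding m_def by simp
      finally show "(Q *\<^sub>v unit_vec n c) $ j = 0\<^sub>v n $ j" using j by simp
    qed (use Q in simp)
    moreover have "unit_vec n c \<noteq> (0\<^sub>v n :: int vec)"
    proof
      assume "unit_vec n c = (0\<^sub>v n :: int vec)"
      hence "unit_vec n c $ c = (0\<^sub>v n :: int vec) $ c" by simp
      thus False using c by simp
    qed
    moreover have "unit_vec n c \<in> carrier_vec n" by simp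
    ultimately have "det Q = 0" using det_0_iff_vec_prod_zero[OF Q(1)] by blast
    thus False using Q(2) by auto
  qed
  obtain i where i: "i < k" "dotp n m (col_real F i) \<noteq> 0" using span[OF mR m0] by blast
  have "dotp n m (col_real F i) = (\<Sum>j<n. real_of_int (Q $$ (j, c)) * real_of_int (F $$ (j, i)))"
    unfolding dotp_def m_def col_real_def using F by (intro sum.cong) auto
  also have "\<dots> = real_of_int (B $$ (i, c))"
    unfolding B_def using F Q i c by (simp add: scalar_prod_def atLeast0LessThan mult.commute)
  also have "B $$ (i, c) = v $ i" unfolding v_def using B i c by simp
  also have "\<dots> = 0" using v0 i by simp
  finally show False using i by simp
qed

theorem lemma3p1:
  fixes n k :: nat
    and \<Sigma> :: "(nat \<Rightarrow> real) set set"
    and \<rho> :: "nat \<Rightarrow> (nat \<Rightarrow> real) set"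
    and F P Q :: "int mat"
    and s :: "nat \<Rightarrow> int"
    and z :: "complex vec"
  assumes fan: "complete_fan n \<Sigma>"
    and rays: "{\<sigma>\<in>\<Sigma>. cone_dim n \<sigma> 1} = \<rho> ` {..<k}"
    and rays_inj: "inj_on \<rho> {..<k}"
    and F: "F \<in> carrier_mat n k"
    and prim: "\<forall>i<k. primitive_generator n (col_real F i) (\<rho> i)"
    and P: "P \<in> carrier_mat k k" "det P = 1 \<or> det P = -1"
    and Q: "Q \<in> carrier_mat n n" "det Q = 1 \<or> det Q = -1"
    and snf: "P * transpose_mat F * Q = mat k n (\<lambda>(i, j). if i = j then s i else 0)"
    and s_pos: "\<forall>i<n. s i > 0"
    and s_dvd: "\<forall>i. Suc i < n \<longrightarrow> s i dvd s (Suc i)"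
    and z: "z \<in> carrier_vec k - base_locus n k \<Sigma> \<rho>"
  shows "case_prod (param_map n k P z) ` param_domain n k s \<subseteq> carrier_vec k - base_locus n k \<Sigma> \<rho> \<and>
         orbit k (cox_group n k F) z = case_prod (param_map n k P z) ` param_domain n k s"
proof -
  have nk: "n \<le> k"
    by (rule k_ge_n[OF rays_span[OF fan rays prim] F P Q snf])
  obtain PI where PI: "PI \<in> carrier_mat k k" "P * PI = 1\<^sub>m k" "PI * P = 1\<^sub>m k"
    using unimod_inv[OF P] by blast
  obtain QI where QI: "QI \<in> carrier_mat n n" "Q * QI = 1\<^sub>m n" "QI * Q = 1\<^sub>m n"
    using unimod_inv[OF Q] by blast
  define D where "D = mat k n (\<lambda>(i, j). if i = j then s i else 0)"
  have FT: "transpose_mat F \<in> carrier_mat k n" using F by simp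
  have PFT: "P * transpose_mat F \<in> carrier_mat k n" using P FT by simp
  have snf': "(P * transpose_mat F) * Q = D" using snf D_def by simp
  have key: "(\<forall>r<n. (\<Prod>i<k. (mp k h P i) powi (F $$ (r,i))) = 1) \<longleftrightarrow> (\<forall>c<n. h c powi s c = 1)"
    if h: "\<forall>l<k. h l \<noteq> 0" for h
  proof -
    define E where "E = mp k h (P * transpose_mat F)"
    have Enz: "\<forall>l<n. E l \<noteq> 0" unfolding E_def using mp_nz[OF h] by blast
    have e: "(\<Prod>i<k. (mp k h P i) powi (F $$ (r,i))) = E r" if r: "r < n" for r
    proof -
      have "(\<Prod>i<k. (mp k h P i) powi (F $$ (r,i))) = mp k (mp k h P) (transpose_mat F) r"
        unfolding mp_def[of k "mp k h P" "transpose_mat F" r] using r F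
        by (intro prod.cong refl) auto
      also have "\<dots> = E r" unfolding E_def by (rule mp_mult[OF P(1) FT r h])
      finally show ?thesis .
    qed
    have c: "mp n E Q c = h c powi s c" if c: "c < n" for c
    proof -
      have "mp n E Q c = mp k h (P * transpose_mat F * Q) c"
        unfolding E_def by (rule mp_mult[OF PFT Q(1) c h])
      also have "\<dots> = h c powi s c" unfolding snf' D_def using c nk by (rule mp_diag)
      finally show ?thesis .
    qed
    show ?thesis
    proof
      assume a: "\<forall>r<n. (\<Prod>i<k. (mp k h P i) powi (F $$ (r,i))) = 1"
      show "\<forall>c<n. h c powi s c = 1"
      proof (intro allI impI)
        fix c assume "c < n"
        have "\<forall>l<n. E l = 1" using a e by auto
        hence "mp n E Q c = 1" by (rule mp_ones)
        thus "h c powi s c = 1" using c[OF \<open>c < n\<close>] by simp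
      qed
    next
      assume a: "\<forall>c<n. h c powi s c = 1"
      show "\<forall>r<n. (\<Prod>i<k. (mp k h P i) powi (F $$ (r,i))) = 1"
      proof (intro allI impI)
        fix r assume r: "r < n"
        have "E r = mp n E (Q * QI) r" using QI r by (simp add: mp_one)
        also have "\<dots> = mp n (mp n E Q) QI r" by (rule mp_mult[OF Q(1) QI(1) r Enz, symmetric])
        also have "\<dots> = 1" by (rule mp_ones) (use a c in auto)
        finally show "(\<Prod>i<k. (mp k h P i) powi (F $$ (r,i))) = 1" using e[OF r] by simp
      qed
    qed
  qed
  have orbit_sub: "orbit k (cox_group n k F) z \<subseteq> case_prod (param_map n k P z) ` param_domain n k s"
  proof
    fix v assume "v \<in> orbit k (cox_group n k F) z"
    then obtain g where g: "g \<in> cox_group n k F" and v: "v = vec k (\<lambda>i. g $ i * z $ i)"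
      unfolding orbit_def by auto
    define h where "h = mp k (\<lambda>i. g $ i) PI"
    have gnz: "\<forall>l<k. g $ l \<noteq> 0" using g unfolding cox_group_def by auto
    have hnz: "\<forall>l<k. h l \<noteq> 0" unfolding h_def using mp_nz[OF gnz] by blast
    have hP: "mp k h P j = g $ j" if j: "j < k" for j
    proof -
      have "mp k h P j = mp k (\<lambda>i. g $ i) (PI * P) j"
        unfolding h_def by (rule mp_mult[OF PI(1) P(1) j gnz])
      also have "\<dots> = g $ j" using PI j by (simp add: mp_one)
      finally show ?thesis .
    qed
    have "\<forall>r<n. (\<Prod>i<k. (mp k h P i) powi (F $$ (r,i))) = 1"
    proof (intro allI impI)
      fix r assume r: "r < n"
      have "(\<Prod>i<k. (mp k h P i) powi (F $$ (r,i))) = (\<Prod>i<k. (g $ i) powi (F $$ (r,i)))"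
        using hP by (intro prod.cong) auto
      also have "\<dots> = 1" using g r unfolding cox_group_def by auto
      finally show "(\<Prod>i<k. (mp k h P i) powi (F $$ (r,i))) = 1" .
    qed
    hence hs: "\<forall>c<n. h c powi s c = 1" using key[OF hnz] by blast
    define w where "w = vec n h"
    define lam where "lam = vec (k - n) (\<lambda>i. h (n + i))"
    have dom: "(w, lam) \<in> param_domain n k s"
      unfolding param_domain_def w_def lam_def
    proof (safe)
      fix i assume i: "i < n"
      have "h i ^ nat (s i) = h i powi s i" using s_pos i power_int_nonneg_exp[of "s i" "h i"] by (metis less_imp_le)
      thus "vec n h $ i ^ nat (s i) = 1" using hs i by simp
    next
      fix i assume i: "i < k - n" "vec (k - n) (\<lambda>i. h (n + i)) $ i = 0"
      thus False using hnz by auto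
    qed auto
    have "param_map n k P z w lam = vec k (\<lambda>j. mp k h P j * z $ j)"
      by (rule param_eq[OF nk]) (auto simp: w_def lam_def)
    also have "\<dots> = v" unfolding v using hP by (intro eq_vecI) auto
    finally show "v \<in> case_prod (param_map n k P z) ` param_domain n k s"
      using dom by force
  qed
  have image_sub: "case_prod (param_map n k P z) ` param_domain n k s \<subseteq> orbit k (cox_group n k F) z"
  proof
    fix v assume "v \<in> case_prod (param_map n k P z) ` param_domain n k s"
    then obtain w lam where dom: "(w, lam) \<in> param_domain n k s" and v: "v = param_map n k P z w lam"
      by auto
    define h where "h = (\<lambda>l. if l < n then w $ l else lam $ (l - n))"
    have ws: "\<forall>i<n. w $ i ^ nat (s i) = 1" using dom unfolding param_domain_def by auto
    have wnz: "w $ i \<noteq> 0" if i: "i < n" for i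
    proof
      assume "w $ i = 0"
      moreover have "nat (s i) > 0" using s_pos i by auto
      ultimately have "w $ i ^ nat (s i) = 0" by (simp add: zero_power)
      thus False using ws i by simp
    qed
    have hnz: "\<forall>l<k. h l \<noteq> 0" using dom wnz unfolding h_def param_domain_def by auto
    have hs: "\<forall>c<n. h c powi s c = 1"
      using ws s_pos unfolding h_def by (auto simp: power_int_nonneg_exp)
    define g where "g = vec k (mp k h P)"
    have gc: "g \<in> cox_group n k F"
      unfolding cox_group_def g_def using key[OF hnz] hs mp_nz[OF hnz] by auto
    have "v = vec k (\<lambda>j. mp k h P j * z $ j)"
      unfolding v by (rule param_eq[OF nk]) (auto simp: h_def)
    also have "\<dots> = vec k (\<lambda>i. g $ i * z $ i)" unfolding g_def by (intro eq_vecI) auto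
    finally show "v \<in> orbit k (cox_group n k F) z" unfolding orbit_def using gc by blast
  qed
  have orbit_good: "orbit k (cox_group n k F) z \<subseteq> carrier_vec k - base_locus n k \<Sigma> \<rho>"
  proof
    fix v assume "v \<in> orbit k (cox_group n k F) z"
    then obtain g where g: "g \<in> cox_group n k F" and v: "v = vec k (\<lambda>i. g $ i * z $ i)"
      unfolding orbit_def by auto
    have gnz: "\<forall>l<k. g $ l \<noteq> 0" using g unfolding cox_group_def by auto
    from z obtain \<sigma> where \<sigma>: "\<sigma> \<in> \<Sigma>" "cone_dim n \<sigma> n"
      and nz: "(\<Prod>i\<in>{i. i < k \<and> \<not> \<rho> i \<subseteq> \<sigma>}. z $ i) \<noteq> 0"
      unfolding base_locus_def by auto
    have "(\<Prod>i\<in>{i. i < k \<and> \<not> \<rho> i \<subseteq> \<sigma>}. v $ i) = 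
          (\<Prod>i\<in>{i. i < k \<and> \<not> \<rho> i \<subseteq> \<sigma>}. g $ i) * (\<Prod>i\<in>{i. i < k \<and> \<not> \<rho> i \<subseteq> \<sigma>}. z $ i)"
      unfolding v by (simp add: prod.distrib[symmetric])
    also have "\<dots> \<noteq> 0" using nz gnz by auto
    finally show "v \<in> carrier_vec k - base_locus n k \<Sigma> \<rho>"
      unfolding base_locus_def using \<sigma> v by auto
  qed
  show ?thesis using orbit_sub image_sub orbit_good by blast
qed

end
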